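(* Let $q$ be a power of $2$, let $a,b\in\mathbb{F}_q$ with $b\ne0$, and let $n\ge2$ be an integer with $\gcd(n+1,q)=1$. Then $n$ is even, and $\hat C_n(a,b)$ is LCD if and only if $$a/b\notin\{-1/b+\theta^i+\theta^{-i} : 1\le i\le n/2\},$$ where $\theta\in\overline{\mathbb{F}}_q$ is a primitive $(n+1)$-th root of unity.
   Context: For $a,b\in\mathbb{F}_q$ and $n\ge 2$, $\hat T_n(a,b)$ denotes the $n\times n$ symmetric tridiagonal Toeplitz matrix over $\mathbb{F}_q$ with all diagonal entries equal to $a$, all entries on the first super- and sub-diagonals equal to $b$, and all other entries $0$. $\hat C_n(a,b)$ is the $[2n,n]$ linear code over $\mathbb{F}_q$ with generator matrix $[I_n\mid \hat T_n(a,b)]$. A linear code $C$ is LCD if $C\cap C^\perp=\{0\}$ (Euclidean dual). *)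

theory Defs
  imports "HOL-Algebra.Algebraic_Closure_Type"
begin

text \<open>Vectors of length m over a field are functions nat => 'a vanishing from index m on.\<close>
definition fvecs :: "nat \<Rightarrow> (nat \<Rightarrow> 'a::zero) set" where
  "fvecs m = {x. \<forall>j\<ge>m. x j = 0}"

text \<open>The n x n symmetric tridiagonal Toeplitz matrix T_n(a,b) (entries indexed from 0).\<close>
definition tridiag_toeplitz :: "nat \<Rightarrow> 'a::zero \<Rightarrow> 'a \<Rightarrow> nat \<Rightarrow> nat \<Rightarrow> 'a" where
  "tridiag_toeplitz n a b i j =
     (if i < n \<and> j < n then
        (if i = j then a else if i = j + 1 \<or> j = i + 1 then b else 0)
      else 0)"

text \<open>Generator matrix [I_n | T_n(a,b)], an n x 2n matrix.\<close>
definition gen_matrix :: "nat \<Rightarrow> 'a::{zero,one} \<Rightarrow> 'a \<Rightarrow> nat \<Rightarrow> nat \<Rightarrow> 'a" where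
  "gen_matrix n a b i j =
     (if i < n \<and> j < n then (if i = j then 1 else 0)
      else if i < n \<and> n \<le> j \<and> j < 2 * n then tridiag_toeplitz n a b i (j - n)
      else 0)"

definition row_code :: "nat \<Rightarrow> nat \<Rightarrow> (nat \<Rightarrow> nat \<Rightarrow> 'a::comm_ring_1) \<Rightarrow> (nat \<Rightarrow> 'a) set" where
  "row_code k m G = {x \<in> fvecs m. \<exists>u. \<forall>j<m. x j = (\<Sum>i<k. u i * G i j)}"

definition toeplitz_code :: "nat \<Rightarrow> 'a::comm_ring_1 \<Rightarrow> 'a \<Rightarrow> (nat \<Rightarrow> 'a) set" where
  "toeplitz_code n a b = row_code n (2 * n) (gen_matrix n a b)"

definition euclid_dual :: "nat \<Rightarrow> (nat \<Rightarrow> 'a::comm_ring_1) set \<Rightarrow> (nat \<Rightarrow> 'a) set" where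
  "euclid_dual m C = {y \<in> fvecs m. \<forall>x\<in>C. (\<Sum>j<m. x j * y j) = 0}"

definition is_LCD :: "nat \<Rightarrow> (nat \<Rightarrow> 'a::comm_ring_1) set \<Rightarrow> bool" where
  "is_LCD m C \<longleftrightarrow> C \<inter> euclid_dual m C = {(\<lambda>_. 0)}"

definition primitive_root_of_unity :: "nat \<Rightarrow> 'a::comm_ring_1 \<Rightarrow> bool" where
  "primitive_root_of_unity k \<theta> \<longleftrightarrow> \<theta> ^ k = 1 \<and> (\<forall>j. 0 < j \<and> j < k \<longrightarrow> \<theta> ^ j \<noteq> 1)"

end

theory Submission
  imports Defs "HOL-Number_Theory.Residues"
begin


lemma char2:
  assumes "\<exists>m. card (UNIV :: 'a::{finite,field} set) = 2 ^ m"
  shows "(2::'a) = 0"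
proof -
  obtain m where m: "card (UNIV :: 'a set) = 2 ^ m" using assms by blast
  have pos: "CHAR('a) > 0" by (rule finite_imp_CHAR_pos) simp
  have pr: "prime CHAR('a)" by (rule prime_CHAR_semidom[OF pos])
  have "CHAR('a) dvd 2 ^ m" using CHAR_dvd_CARD[where 'a='a] m by simp
  hence d: "CHAR('a) dvd 2" using pr prime_dvd_power by blast
  have "CHAR('a) \<le> 2" using d by (rule dvd_imp_le) auto
  moreover have "CHAR('a) > 1" using pr prime_gt_1_nat by blast
  ultimately have "CHAR('a) = 2" by arith
  thus ?thesis using of_nat_CHAR[where 'a='a] by simp
qed

lemma even_n:
  assumes "\<exists>m. card (UNIV :: 'a::{finite,field} set) = 2 ^ m"
    and "gcd (n + 1) (card (UNIV :: 'a set)) = 1"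
  shows "even n"
proof -
  obtain m where m: "card (UNIV :: 'a set) = 2 ^ m" using assms by blast
  have "card (UNIV :: 'a set) \<ge> 2"
  proof -
    have "{0::'a, 1} \<subseteq> UNIV" by simp
    hence "card {0::'a,1} \<le> card (UNIV :: 'a set)" by (intro card_mono) auto
    thus ?thesis by simp
  qed
  hence "m \<noteq> 0" using m by (cases m) auto
  hence "2 dvd card (UNIV :: 'a set)" using m by simp
  moreover have "odd n \<Longrightarrow> 2 dvd (n+1)" by simp
  ultimately show ?thesis using assms(2)
    by (metis gcd_nat.boundedI gcd_nat.eq_neutr_iff nat_dvd_1_iff_1 numeral_eq_one_iff semiring_norm(85))
qed

definition mv :: "nat \<Rightarrow> (nat \<Rightarrow> nat \<Rightarrow> 'a::comm_ring_1) \<Rightarrow> (nat \<Rightarrow> 'a) \<Rightarrow> nat \<Rightarrow> 'a" where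
  "mv n M v i = (\<Sum>l<n. M i l * v l)"

fun sq :: "'a::comm_ring_1 \<Rightarrow> nat \<Rightarrow> 'a" where
  "sq t 0 = 0" | "sq t (Suc 0) = 1" | "sq t (Suc (Suc k)) = t * sq t (Suc k) - sq t k"

lemma T_sym: "tridiag_toeplitz n a b i l = tridiag_toeplitz n a b l i"
  unfolding tridiag_toeplitz_def by auto

lemma T_out: "i \<ge> n \<Longrightarrow> tridiag_toeplitz n a b i l = 0"
  unfolding tridiag_toeplitz_def by auto

lemma mv_T_fvecs: "mv n (tridiag_toeplitz n a b) v \<in> fvecs n"
  unfolding fvecs_def mv_def by (auto simp: T_out)

lemma adj:
  assumes "\<And>i l. M i l = M l i"
  shows "(\<Sum>k<n. mv n M u k * w k) = (\<Sum>i<n. u i * mv n M w i)"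
proof -
  have "(\<Sum>k<n. mv n M u k * w k) = (\<Sum>k<n. \<Sum>i<n. M k i * u i * w k)"
    unfolding mv_def by (simp add: sum_distrib_right)
  also have "\<dots> = (\<Sum>i<n. \<Sum>k<n. M k i * u i * w k)" by (rule sum.swap)
  also have "\<dots> = (\<Sum>i<n. u i * mv n M w i)"
    unfolding mv_def by (simp add: sum_distrib_left assms mult_ac)
  finally show ?thesis .
qed

lemma sum_split2: fixes n m :: nat shows "(\<Sum>j<n+m. f j) = (\<Sum>j<n. f j) + (\<Sum>k<m. f (n+k))"
  by (induction m) (simp_all add: add_ac)

definition enc :: "nat \<Rightarrow> 'a::comm_ring_1 \<Rightarrow> 'a \<Rightarrow> (nat \<Rightarrow> 'a) \<Rightarrow> nat \<Rightarrow> 'a" where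
  "enc n a b u j = (if j < n then u j else if j < 2*n then mv n (tridiag_toeplitz n a b) u (j-n) else 0)"

lemma code_iff:
  "x \<in> toeplitz_code n a b \<longleftrightarrow> (\<exists>u\<in>fvecs n. x = enc n a b u)"
proof
  assume "x \<in> toeplitz_code n a b"
  then obtain u where x: "x \<in> fvecs (2*n)" and xu: "\<forall>j<2*n. x j = (\<Sum>i<n. u i * gen_matrix n a b i j)"
    unfolding toeplitz_code_def row_code_def by auto
  define u' where "u' = (\<lambda>i. if i < n then u i else 0)"
  have "u' \<in> fvecs n" unfolding u'_def fvecs_def by auto
  moreover have "x = enc n a b u'"
  proof
    fix j
    show "x j = enc n a b u' j"
    proof (cases "j < n")
      case True
      have "x j = (\<Sum>i<n. u i * gen_matrix n a b i j)" using xu True by auto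
      also have "\<dots> = (\<Sum>i<n. if i = j then u i else 0)"
        by (rule sum.cong) (use True in \<open>auto simp: gen_matrix_def\<close>)
      also have "\<dots> = u j" using True by simp
      finally show ?thesis using True by (simp add: enc_def u'_def)
    next
      case False
      show ?thesis
      proof (cases "j < 2*n")
        case True
        have "x j = (\<Sum>i<n. u i * gen_matrix n a b i j)" using xu True by auto
        also have "\<dots> = (\<Sum>i<n. tridiag_toeplitz n a b (j-n) i * u' i)"
          by (rule sum.cong) (use True False in \<open>auto simp: gen_matrix_def u'_def T_sym mult_ac\<close>)
        finally show ?thesis using True False by (simp add: enc_def mv_def)
      next
        case F2: False
        then show ?thesis using x False by (simp add: enc_def fvecs_def)
      qed
    qed
  qed
  ultimately show "\<exists>u\<in>fvecs n. x = enc n a b u" by blast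
next
  assume "\<exists>u\<in>fvecs n. x = enc n a b u"
  then obtain u where u: "u \<in> fvecs n" and x: "x = enc n a b u" by blast
  have "x \<in> fvecs (2*n)" unfolding x fvecs_def enc_def by auto
  moreover have "\<forall>j<2*n. x j = (\<Sum>i<n. u i * gen_matrix n a b i j)"
  proof (intro allI impI)
    fix j assume j: "j < 2*n"
    show "x j = (\<Sum>i<n. u i * gen_matrix n a b i j)"
    proof (cases "j < n")
      case True
      have "(\<Sum>i<n. u i * gen_matrix n a b i j) = (\<Sum>i<n. if i = j then u i else 0)"
        by (rule sum.cong) (use True in \<open>auto simp: gen_matrix_def\<close>)
      also have "\<dots> = u j" using True by simp
      finally show ?thesis using True by (simp add: x enc_def)
    next
      case False
      have "(\<Sum>i<n. u i * gen_matrix n a b i j) = (\<Sum>i<n. tridiag_toeplitz n a b (j-n) i * u i)"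
        by (rule sum.cong) (use j False in \<open>auto simp: gen_matrix_def T_sym mult_ac\<close>)
      thus ?thesis using j False by (simp add: x enc_def mv_def)
    qed
  qed
  ultimately show "x \<in> toeplitz_code n a b"
    unfolding toeplitz_code_def row_code_def by blast
qed

lemma inner_enc:
  "(\<Sum>j<2*n. enc n a b u j * enc n a b v j) =
   (\<Sum>i<n. u i * (v i + mv n (tridiag_toeplitz n a b) (mv n (tridiag_toeplitz n a b) v) i))"
proof -
  let ?T = "tridiag_toeplitz n a b"
  have "(\<Sum>j<2*n. enc n a b u j * enc n a b v j) =
        (\<Sum>j<n. enc n a b u j * enc n a b v j) + (\<Sum>k<n. enc n a b u (n+k) * enc n a b v (n+k))"
    using sum_split2[of "\<lambda>j. enc n a b u j * enc n a b v j" n n] by (simp add: mult_2)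
  also have "(\<Sum>j<n. enc n a b u j * enc n a b v j) = (\<Sum>j<n. u j * v j)"
    by (rule sum.cong) (auto simp: enc_def)
  also have "(\<Sum>k<n. enc n a b u (n+k) * enc n a b v (n+k)) = (\<Sum>k<n. mv n ?T u k * mv n ?T v k)"
    by (rule sum.cong) (auto simp: enc_def)
  also have "\<dots> = (\<Sum>i<n. u i * mv n ?T (mv n ?T v) i)"
    by (rule adj) (rule T_sym)
  finally show ?thesis by (simp add: distrib_left sum.distrib)
qed

lemma enc_zero_iff: "enc n a b u = (\<lambda>_. 0) \<longleftrightarrow> (\<forall>i<n. u i = 0)"
proof
  assume "enc n a b u = (\<lambda>_. 0)"
  thus "\<forall>i<n. u i = 0" by (metis enc_def)
next
  assume h: "\<forall>i<n. u i = 0"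
  show "enc n a b u = (\<lambda>_. 0)"
    by (rule ext) (simp add: enc_def mv_def h)
qed

lemma LCD_iff:
  fixes a b :: "'a::comm_ring_1"
  shows "is_LCD (2*n) (toeplitz_code n a b) \<longleftrightarrow>
   (\<forall>v\<in>fvecs n. (\<forall>i<n. v i + mv n (tridiag_toeplitz n a b) (mv n (tridiag_toeplitz n a b) v) i = 0)
        \<longrightarrow> (\<forall>i<n. v i = 0))"
  (is "?L \<longleftrightarrow> ?R")
proof -
  let ?T = "tridiag_toeplitz n a b"
  let ?C = "toeplitz_code n a b"
  have z0: "(\<lambda>_. 0) \<in> fvecs n" by (simp add: fvecs_def)
  have zC: "(\<lambda>_. 0) \<in> ?C" unfolding code_iff
    by (rule bexI[OF _ z0]) (rule sym, simp add: enc_zero_iff)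
  have zD: "(\<lambda>_. 0) \<in> euclid_dual (2*n) ?C" by (simp add: euclid_dual_def fvecs_def)
  have encf: "enc n a b v \<in> fvecs (2*n)" for v unfolding fvecs_def enc_def by auto
  have orth: "(\<forall>u\<in>fvecs n. (\<Sum>i<n. u i * w i) = 0) \<longleftrightarrow> (\<forall>i<n. w i = 0)" for w :: "nat \<Rightarrow> 'a"
  proof
    assume h: "\<forall>u\<in>fvecs n. (\<Sum>i<n. u i * w i) = 0"
    show "\<forall>i<n. w i = 0"
    proof (intro allI impI)
      fix i assume i: "i < n"
      have "(\<lambda>j. if j = i then 1 else 0) \<in> fvecs n" using i by (auto simp: fvecs_def)
      from h[rule_format, OF this] have "(\<Sum>j<n. (if j = i then 1 else 0) * w j) = 0" .
      moreover have "(\<Sum>j<n. (if j = i then 1 else 0) * w j) = (\<Sum>j<n. if j = i then w j else 0)"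
        by (rule sum.cong) auto
      ultimately show "w i = 0" using i by simp
    qed
  qed simp
  have "?L \<longleftrightarrow> (\<forall>x. x \<in> ?C \<and> x \<in> euclid_dual (2*n) ?C \<longrightarrow> x = (\<lambda>_. 0))"
    unfolding is_LCD_def using zC zD by blast
  also have "\<dots> \<longleftrightarrow> ?R"
  proof
    assume h: "\<forall>x. x \<in> ?C \<and> x \<in> euclid_dual (2*n) ?C \<longrightarrow> x = (\<lambda>_. 0)"
    show ?R
    proof (intro ballI impI)
      fix v assume v: "v \<in> fvecs n" and k: "\<forall>i<n. v i + mv n ?T (mv n ?T v) i = 0"
      have "enc n a b v \<in> ?C" unfolding code_iff using v by blast
      moreover have "enc n a b v \<in> euclid_dual (2*n) ?C"
        unfolding euclid_dual_def
      proof (intro CollectI conjI ballI)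
        show "enc n a b v \<in> fvecs (2*n)" by (rule encf)
        fix x assume "x \<in> ?C"
        then obtain u where u: "u \<in> fvecs n" and xu: "x = enc n a b u" unfolding code_iff by blast
        show "(\<Sum>j<2*n. x j * enc n a b v j) = 0" unfolding xu inner_enc using k by simp
      qed
      ultimately show "\<forall>i<n. v i = 0" using h enc_zero_iff by metis
    qed
  next
    assume h: ?R
    show "\<forall>x. x \<in> ?C \<and> x \<in> euclid_dual (2*n) ?C \<longrightarrow> x = (\<lambda>_. 0)"
    proof (intro allI impI)
      fix x assume x: "x \<in> ?C \<and> x \<in> euclid_dual (2*n) ?C"
      then obtain v where v: "v \<in> fvecs n" and xv: "x = enc n a b v" unfolding code_iff by blast
      have "\<forall>u\<in>fvecs n. (\<Sum>i<n. u i * (v i + mv n ?T (mv n ?T v) i)) = 0"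
      proof
        fix u :: "nat \<Rightarrow> 'a" assume u: "u \<in> fvecs n"
        have "enc n a b u \<in> ?C" unfolding code_iff using u by blast
        with x xv show "(\<Sum>i<n. u i * (v i + mv n ?T (mv n ?T v) i)) = 0"
          unfolding euclid_dual_def by (auto simp: inner_enc[symmetric] mult.commute)
      qed
      hence "\<forall>i<n. v i + mv n ?T (mv n ?T v) i = 0" by (simp only: orth)
      hence "\<forall>i<n. v i = 0" using h v by blast
      thus "x = (\<lambda>_. 0)" using xv enc_zero_iff by metis
    qed
  qed
  finally show ?thesis .
qed



lemma A_split:
  fixes a b :: "'a::comm_ring_1"
  assumes "i < n"
  shows "mv n (tridiag_toeplitz n (a+1) b) w i = w i + mv n (tridiag_toeplitz n a b) w i"
proof -
  have "mv n (tridiag_toeplitz n (a+1) b) w i =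
        (\<Sum>l<n. (if l = i then w l else 0) + tridiag_toeplitz n a b i l * w l)"
    unfolding mv_def by (rule sum.cong) (use assms in \<open>auto simp: tridiag_toeplitz_def distrib_right\<close>)
  also have "\<dots> = w i + mv n (tridiag_toeplitz n a b) w i"
    using assms by (simp add: sum.distrib mv_def)
  finally show ?thesis .
qed

lemma mv_cong:
  assumes "\<And>l. l < n \<Longrightarrow> v l = w l"
  shows "mv n M v i = mv n M w i"
  unfolding mv_def using assms by (intro sum.cong) auto

lemma mv_add: "mv n M (\<lambda>l. v l + w l) i = mv n M v i + mv n M w i"
  unfolding mv_def by (simp add: distrib_left sum.distrib)

lemma AA:
  fixes a b :: "'a::comm_ring_1"
  assumes two: "(2::'a) = 0" and "i < n"
  shows "mv n (tridiag_toeplitz n (a+1) b) (mv n (tridiag_toeplitz n (a+1) b) v) i =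
         v i + mv n (tridiag_toeplitz n a b) (mv n (tridiag_toeplitz n a b) v) i"
proof -
  let ?A = "tridiag_toeplitz n (a+1) b" and ?T = "tridiag_toeplitz n a b"
  have "mv n ?A (mv n ?A v) i = mv n ?A v i + mv n ?T (mv n ?A v) i"
    by (rule A_split[OF assms(2)])
  also have "mv n ?T (mv n ?A v) i = mv n ?T (\<lambda>l. v l + mv n ?T v l) i"
    by (rule mv_cong) (rule A_split)
  also have "\<dots> = mv n ?T v i + mv n ?T (mv n ?T v) i" by (rule mv_add)
  also have "mv n ?A v i = v i + mv n ?T v i" by (rule A_split[OF assms(2)])
  finally have e: "mv n ?A (mv n ?A v) i = (v i + mv n ?T v i) + (mv n ?T v i + mv n ?T (mv n ?T v) i)" .
  have tt: "mv n ?T v i + mv n ?T v i = 0" using two by (metis mult_2 mult_zero_left)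
  have "(v i + mv n ?T v i) + (mv n ?T v i + mv n ?T (mv n ?T v) i) =
        v i + (mv n ?T v i + mv n ?T v i) + mv n ?T (mv n ?T v) i" by (simp only: add.assoc)
  thus ?thesis using e tt by simp
qed

lemma mv_A_fvecs: "mv n (tridiag_toeplitz n c b) v \<in> fvecs n"
  by (rule mv_T_fvecs)

lemma LCD_ker:
  fixes a b :: "'a::comm_ring_1"
  assumes two: "(2::'a) = 0"
  shows "is_LCD (2*n) (toeplitz_code n a b) \<longleftrightarrow>
    (\<forall>w\<in>fvecs n. (\<forall>i<n. mv n (tridiag_toeplitz n (a+1) b) w i = 0) \<longrightarrow> (\<forall>i<n. w i = 0))"
proof -
  let ?A = "tridiag_toeplitz n (a+1) b"
  have "is_LCD (2*n) (toeplitz_code n a b) \<longleftrightarrow>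
     (\<forall>v\<in>fvecs n. (\<forall>i<n. mv n ?A (mv n ?A v) i = 0) \<longrightarrow> (\<forall>i<n. v i = 0))"
  proof -
    have e: "(\<forall>i<n. mv n ?A (mv n ?A v) i = 0) = (\<forall>i<n. v i + mv n (tridiag_toeplitz n a b) (mv n (tridiag_toeplitz n a b) v) i = 0)" for v
      using AA[OF two, of _ n a b v] by metis
    show ?thesis unfolding LCD_iff e ..
  qed
  also have "\<dots> \<longleftrightarrow> (\<forall>w\<in>fvecs n. (\<forall>i<n. mv n ?A w i = 0) \<longrightarrow> (\<forall>i<n. w i = 0))"
  proof
    assume h: "\<forall>v\<in>fvecs n. (\<forall>i<n. mv n ?A (mv n ?A v) i = 0) \<longrightarrow> (\<forall>i<n. v i = 0)"
    show "\<forall>w\<in>fvecs n. (\<forall>i<n. mv n ?A w i = 0) \<longrightarrow> (\<forall>i<n. w i = 0)"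
    proof (intro ballI impI)
      fix w :: "nat \<Rightarrow> 'a" assume w: "w \<in> fvecs n" and k: "\<forall>i<n. mv n ?A w i = 0"
      have "\<forall>i<n. mv n ?A (mv n ?A w) i = 0"
        using k by (auto simp: mv_def)
      thus "\<forall>i<n. w i = 0" using h w by blast
    qed
  next
    assume h: "\<forall>w\<in>fvecs n. (\<forall>i<n. mv n ?A w i = 0) \<longrightarrow> (\<forall>i<n. w i = 0)"
    show "\<forall>v\<in>fvecs n. (\<forall>i<n. mv n ?A (mv n ?A v) i = 0) \<longrightarrow> (\<forall>i<n. v i = 0)"
    proof (intro ballI impI)
      fix v :: "nat \<Rightarrow> 'a" assume v: "v \<in> fvecs n" and k: "\<forall>i<n. mv n ?A (mv n ?A v) i = 0"
      have "\<forall>i<n. mv n ?A v i = 0" using h mv_A_fvecs k by blast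
      thus "\<forall>i<n. v i = 0" using h v by blast
    qed
  qed
  finally show ?thesis .
qed

lemma row:
  fixes c b :: "'a::comm_ring_1"
  assumes w: "w \<in> fvecs n" and i: "i < n"
  shows "mv n (tridiag_toeplitz n c b) w i = c * w i + b * (if 0 < i then w (i-1) else 0) + b * w (i+1)"
proof -
  have "mv n (tridiag_toeplitz n c b) w i =
     (\<Sum>l<n. (if l = i then c * w l else 0) + (if l = i - 1 \<and> 0 < i then b * w l else 0)
        + (if l = i + 1 then b * w l else 0))"
    unfolding mv_def
  proof (rule sum.cong[OF refl])
    fix l assume l: "l \<in> {..<n}"
    show "tridiag_toeplitz n c b i l * w l = (if l = i then c * w l else 0) + (if l = i - 1 \<and> 0 < i then b * w l else 0)
        + (if l = i + 1 then b * w l else 0)"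
    proof (cases "l = i")
      case True
      have "\<not> (i = i - 1 \<and> 0 < i)" by arith
      thus ?thesis using True i l by (auto simp: tridiag_toeplitz_def)
    next
      case F1: False
      show ?thesis
      proof (cases "i = l + 1")
        case True then show ?thesis using i l by (simp add: tridiag_toeplitz_def)
      next
        case F2: False
        have "\<not> (l = i - 1 \<and> 0 < i)" using F2 by arith
        then show ?thesis using F1 F2 i l by (simp add: tridiag_toeplitz_def)
      qed
    qed
  qed
  also have "\<dots> = c * w i + (if 0 < i then b * w (i-1) else 0) + (if i + 1 < n then b * w (i+1) else 0)"
  proof -
    have s1: "(\<Sum>l<n. if l = i then c * w l else 0) = c * w i" using i by simp
    have s2: "(\<Sum>l<n. if l = i - 1 \<and> 0 < i then b * w l else 0) = (if 0 < i then b * w (i-1) else 0)"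
      using i by (cases i) simp_all
    have s3: "(\<Sum>l<n. if l = i + 1 then b * w l else 0) = (if i + 1 < n then b * w (i+1) else 0)"
      by simp
    show ?thesis unfolding sum.distrib s1 s2 s3 ..
  qed
  also have "(if i + 1 < n then b * w (i+1) else 0) = b * w (i+1)"
    using w i by (auto simp: fvecs_def)
  finally show ?thesis by simp
qed



lemma ker_iff:
  fixes c b :: "'a::field"
  assumes b: "b \<noteq> 0" and n: "n \<ge> 1"
  shows "(\<forall>w\<in>fvecs n. (\<forall>i<n. mv n (tridiag_toeplitz n c b) w i = 0) \<longrightarrow> (\<forall>i<n. w i = 0))
         \<longleftrightarrow> sq (-c/b) (n+1) \<noteq> 0"
proof -
  define t where "t = -c/b"
  have bt: "b * t = -c" using b by (simp add: t_def)
  have cc: "c = -(b * t)" using bt by simp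
  have "(\<forall>w\<in>fvecs n. (\<forall>i<n. mv n (tridiag_toeplitz n c b) w i = 0) \<longrightarrow> (\<forall>i<n. w i = 0))
         \<longleftrightarrow> sq t (n+1) \<noteq> 0"
  proof
    assume h: "\<forall>w\<in>fvecs n. (\<forall>i<n. mv n (tridiag_toeplitz n c b) w i = 0) \<longrightarrow> (\<forall>i<n. w i = 0)"
    show "sq t (n+1) \<noteq> 0"
    proof
      assume z: "sq t (n+1) = 0"
      define w where "w k = (if k < n then sq t (k+1) else 0)" for k
      have wf: "w \<in> fvecs n" by (simp add: w_def fvecs_def)
      have "\<forall>i<n. mv n (tridiag_toeplitz n c b) w i = 0"
      proof (intro allI impI)
        fix i assume i: "i < n"
        have w1: "w i = sq t (i+1)" using i by (simp add: w_def)
        have w2: "(if 0 < i then w (i-1) else 0) = sq t i"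
          using i by (cases i) (auto simp: w_def)
        have w3: "w (i+1) = sq t (i+2)"
        proof (cases "i + 1 < n")
          case True thus ?thesis by (simp add: w_def)
        next
          case False hence "i + 1 = n" using i by simp
          thus ?thesis using z by (simp add: w_def)
        qed
        have s: "sq t (i+2) = t * sq t (i+1) - sq t i" by (simp add: numeral_2_eq_2)
        have "mv n (tridiag_toeplitz n c b) w i = c * sq t (i+1) + b * sq t i + b * (t * sq t (i+1) - sq t i)"
          using row[OF wf i] w1 w2 w3 s by simp
        also have "\<dots> = (c + b * t) * sq t (i+1)" by (simp add: algebra_simps)
        also have "\<dots> = 0" using bt by simp
        finally show "mv n (tridiag_toeplitz n c b) w i = 0" .
      qed
      hence "w 0 = 0" using h wf n by auto
      moreover have "w 0 = 1" using n by (simp add: w_def)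
      ultimately show False by simp
    qed
  next
    assume nz: "sq t (n+1) \<noteq> 0"
    show "\<forall>w\<in>fvecs n. (\<forall>i<n. mv n (tridiag_toeplitz n c b) w i = 0) \<longrightarrow> (\<forall>i<n. w i = 0)"
    proof (intro ballI impI)
      fix w :: "nat \<Rightarrow> 'a" assume wf: "w \<in> fvecs n" and k: "\<forall>i<n. mv n (tridiag_toeplitz n c b) w i = 0"
      have rowk: "c * w i + b * (if 0 < i then w (i-1) else 0) + b * w (i+1) = 0" if "i < n" for i
        using row[OF wf that, of c b] k[rule_format, OF that] by simp
      have rec: "k < n \<longrightarrow> w k = w 0 * sq t (k+1) \<and> w (k+1) = w 0 * sq t (k+2)" for k
      proof (induction k)
        case 0
        show ?case
        proof
          assume "0 < n"
          have "c * w 0 + b * w 1 = 0" using rowk[OF \<open>0 < n\<close>] by simp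
          moreover have "b * w 1 - b * (t * w 0) = c * w 0 + b * w 1" using cc by (simp add: algebra_simps)
          ultimately have "b * w 1 = b * (t * w 0)" by simp
          hence "w 1 = t * w 0" using b by simp
          thus "w 0 = w 0 * sq t (0+1) \<and> w (0+1) = w 0 * sq t (0+2)"
            by (simp add: numeral_2_eq_2 mult.commute)
        qed
      next
        case (Suc k)
        show ?case
        proof
          assume sk: "Suc k < n"
          from Suc.IH sk have ih: "w k = w 0 * sq t (k+1)" "w (k+1) = w 0 * sq t (k+2)" by auto
          have "c * w (k+1) + b * w k + b * w (k+2) = 0" using rowk[OF sk] by simp
          moreover have "b * w (k+2) - b * (t * w (k+1) - w k) = c * w (k+1) + b * w k + b * w (k+2)"
            using cc by (simp add: algebra_simps)
          ultimately have "b * w (k+2) = b * (t * w (k+1) - w k)" by simp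
          hence "w (k+2) = t * w (k+1) - w k" using b by simp
          also have "\<dots> = w 0 * (t * sq t (k+2) - sq t (k+1))" unfolding ih by (simp add: algebra_simps del: sq.simps)
          also have "t * sq t (k+2) - sq t (k+1) = sq t (k+3)" by (simp add: numeral_eq_Suc)
          finally have "w (k+2) = w 0 * sq t (k+3)" .
          thus "w (Suc k) = w 0 * sq t (Suc k + 1) \<and> w (Suc k + 1) = w 0 * sq t (Suc k + 2)"
            using ih by (simp add: numeral_eq_Suc)
        qed
      qed
      have "w n = w 0 * sq t (n+1)" using rec[of "n-1"] n by simp
      moreover have "w n = 0" using wf by (simp add: fvecs_def)
      ultimately have w0: "w 0 = 0" using nz by simp
      show "\<forall>i<n. w i = 0" using rec w0 by auto
    qed
  qed
  thus ?thesis by (simp add: t_def)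
qed

lemma to_ac_sq: "to_ac (sq t k) = sq (to_ac t) k"
  by (induction t k rule: sq.induct) simp_all

lemma sq_closed:
  fixes x y :: "'b::comm_ring_1"
  assumes xy: "x * y = 1"
  shows "sq (x+y) k * (x - y) = x^k - y^k"
proof (induction "x+y" k rule: sq.induct)
  case (3 k)
  have a: "x * y ^ Suc k = y ^ k" by (metis xy mult.assoc mult_1 power_Suc)
  have b: "y * x ^ Suc k = x ^ k" by (metis xy mult.commute mult.assoc mult_1 power_Suc)
  have "sq (x+y) (Suc (Suc k)) * (x - y) = (x+y) * (sq (x+y) (Suc k) * (x - y)) - sq (x+y) k * (x - y)"
    by (simp add: algebra_simps)
  also have "\<dots> = (x+y) * (x ^ Suc k - y ^ Suc k) - (x^k - y^k)" using 3 by simp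
  also have "\<dots> = x * x ^ Suc k - y * y ^ Suc k + (y * x ^ Suc k - x * y ^ Suc k) - (x^k - y^k)"
    by (simp add: algebra_simps)
  also have "\<dots> = x ^ Suc (Suc k) - y ^ Suc (Suc k)" using a b by simp
  finally show ?case .
qed simp_all

lemma sq0_odd: "sq (0::'b::comm_ring_1) (Suc (2*k)) = (-1)^k"
  by (induction k) simp_all


lemma roots_are_powers:
  fixes \<theta> x :: "'b::field"
  assumes prim: "primitive_root_of_unity (n+1) \<theta>" and x: "x ^ (n+1) = 1"
  shows "\<exists>j<n+1. x = \<theta> ^ j"
proof -
  define R where "R = {u::'b. u ^ (n+1) = 1}"
  define p :: "'b poly" where "p = monom 1 (n+1) - 1"
  have pp: "poly p u = u ^ (n+1) - 1" for u by (simp add: p_def poly_monom)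
  have p0: "p \<noteq> 0"
  proof
    assume "p = 0" hence "poly p 0 = 0" by simp
    thus False by (simp add: pp)
  qed
  have R_eq: "R = {u. poly p u = 0}" by (simp add: R_def pp)
  have fin: "finite R" unfolding R_eq by (rule poly_roots_finite[OF p0])
  have "card R \<le> degree p" unfolding R_eq by (rule card_poly_roots_bound[OF p0])
  also have "degree p \<le> n+1" unfolding p_def
    by (rule degree_diff_le) (auto simp: degree_monom_le)
  finally have cR: "card R \<le> n+1" .
  have th0: "\<theta> \<noteq> 0" using prim by (auto simp: primitive_root_of_unity_def)
  have inj: "inj_on (\<lambda>j. \<theta> ^ j) {..<n+1}"
  proof (rule inj_onI, rule ccontr)
    fix j k assume j: "j \<in> {..<n+1}" and k: "k \<in> {..<n+1}" and e: "\<theta> ^ j = \<theta> ^ k" and ne: "j \<noteq> k"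
    have "\<exists>d. 0 < d \<and> d < n+1 \<and> \<theta> ^ d = 1"
    proof (cases "j < k")
      case True
      have "\<theta> ^ k = \<theta> ^ j * \<theta> ^ (k - j)" using True by (simp add: power_add[symmetric])
      hence "\<theta> ^ (k-j) = 1" using e th0 by simp
      thus ?thesis using True k by (intro exI[of _ "k-j"]) auto
    next
      case False hence kj: "k < j" using ne by simp
      have "\<theta> ^ j = \<theta> ^ k * \<theta> ^ (j - k)" using kj by (simp add: power_add[symmetric])
      hence "\<theta> ^ (j-k) = 1" using e th0 by simp
      thus ?thesis using kj j by (intro exI[of _ "j-k"]) auto
    qed
    thus False using prim by (auto simp: primitive_root_of_unity_def)
  qed
  have sub: "(\<lambda>j. \<theta> ^ j) ` {..<n+1} \<subseteq> R"
  proof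
    fix u assume "u \<in> (\<lambda>j. \<theta> ^ j) ` {..<n+1}"
    then obtain j where u: "u = \<theta> ^ j" by blast
    have "u ^ (n+1) = (\<theta> ^ (n+1)) ^ j" unfolding u by (metis power_mult mult.commute)
    thus "u \<in> R" using prim by (simp add: R_def primitive_root_of_unity_def)
  qed
  have "card ((\<lambda>j. \<theta> ^ j) ` {..<n+1}) = n+1" using inj by (simp add: card_image)
  moreover have "card ((\<lambda>j. \<theta> ^ j) ` {..<n+1}) \<le> card R" by (rule card_mono[OF fin sub])
  ultimately have "(\<lambda>j. \<theta> ^ j) ` {..<n+1} = R" using sub fin cR
    by (intro card_subset_eq) auto
  moreover have "x \<in> R" using x by (simp add: R_def)
  ultimately show ?thesis by blast
qed

lemma main_roots:
  fixes \<theta> y :: "'b::alg_closed_field"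
  assumes two: "(2::'b) = 0" and prim: "primitive_root_of_unity (n+1) \<theta>" and ev: "even n"
  shows "sq y (n+1) = 0 \<longleftrightarrow> (\<exists>i. y = \<theta>^i + inverse \<theta> ^ i \<and> 1 \<le> i \<and> i \<le> n div 2)"
proof
  assume "\<exists>i. y = \<theta>^i + inverse \<theta> ^ i \<and> 1 \<le> i \<and> i \<le> n div 2"
  then obtain i where y: "y = \<theta>^i + inverse \<theta> ^ i" and i1: "1 \<le> i" and i2: "i \<le> n div 2" by blast
  have th0: "\<theta> \<noteq> 0" using prim by (auto simp: primitive_root_of_unity_def)
  define x where "x = \<theta> ^ i"
  have x0: "x \<noteq> 0" using th0 by (simp add: x_def)
  have y': "y = x + inverse x" by (simp add: y x_def power_inverse)
  have xx: "x * inverse x = 1" using x0 by simp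
  have c: "sq y (n+1) * (x - inverse x) = x^(n+1) - inverse x ^ (n+1)"
    unfolding y' by (rule sq_closed[OF xx])
  have xn: "x^(n+1) = 1"
  proof -
    have "x^(n+1) = (\<theta>^(n+1))^i" unfolding x_def by (metis power_mult mult.commute)
    thus ?thesis using prim by (simp add: primitive_root_of_unity_def)
  qed
  have ixn: "inverse x ^ (n+1) = 1" by (simp only: power_inverse xn inverse_1)
  have e: "sq y (n+1) * (x - inverse x) = 0" using c unfolding xn ixn by simp
  have "x - inverse x \<noteq> 0"
  proof
    assume "x - inverse x = 0"
    hence "x * x = 1" using xx by simp
    hence "\<theta> ^ (2*i) = 1" by (simp add: x_def mult_2 power_add)
    moreover have "0 < 2*i" "2*i < n+1" using i1 i2 by auto
    ultimately show False using prim by (auto simp: primitive_root_of_unity_def)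
  qed
  thus "sq y (n+1) = 0" using e by simp
next
  assume sz: "sq y (n+1) = 0"
  have "degree [:1, -y, 1:] > 0" by simp
  then obtain x where "poly [:1, -y, 1:] x = 0" using alg_closed_imp_poly_has_root by blast
  hence eq: "1 + x * (- y + x) = 0" by simp
  have x0: "x \<noteq> 0" using eq by auto
  have "x * x + 1 - x * y = 0" using eq by (simp add: algebra_simps)
  hence e2: "x * x + 1 = x * y" by simp
  have y': "y = x + inverse x" using x0 e2 by (simp add: field_simps mult.commute)
  have xx: "x * inverse x = 1" using x0 by simp
  have cl: "sq y (n+1) * (x - inverse x) = x^(n+1) - inverse x ^ (n+1)"
    unfolding y' by (rule sq_closed[OF xx])
  have sq1: "z * z = 1 \<Longrightarrow> z = 1" for z :: 'b
  proof -
    assume zz: "z * z = 1"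
    have "(z - 1) * (z - 1) = z * z - 2 * z + 1" by (simp add: algebra_simps mult_2)
    also have "\<dots> = 0" using zz two by simp
    finally show "z = 1" by simp
  qed
  have xne: "x \<noteq> inverse x"
  proof
    assume xi: "x = inverse x"
    hence "x * x = 1" using xx by simp
    hence x1: "x = 1" by (rule sq1)
    hence "y = 0" using y' two by simp
    obtain k where nk: "n = 2 * k" using ev by blast
    have "sq y (n+1) = (-1)^k" using \<open>y = 0\<close> nk sq0_odd by simp
    thus False using sz by simp
  qed
  have "x^(n+1) = inverse x ^ (n+1)" using cl sz by simp
  hence zi: "x^(n+1) = inverse (x^(n+1))" by (simp only: power_inverse)
  have "x^(n+1) \<noteq> 0" using x0 by simp
  hence "x^(n+1) * x^(n+1) = 1" using zi by (metis right_inverse)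
  hence xn: "x^(n+1) = 1" by (rule sq1)
  obtain j where j: "j < n+1" and xj: "x = \<theta> ^ j" using roots_are_powers[OF prim xn] by blast
  have th0: "\<theta> \<noteq> 0" using prim by (auto simp: primitive_root_of_unity_def)
  have j0: "j \<noteq> 0"
  proof
    assume "j = 0" hence "x = 1" using xj by simp
    thus False using xne by simp
  qed
  show "\<exists>i. y = \<theta>^i + inverse \<theta> ^ i \<and> 1 \<le> i \<and> i \<le> n div 2"
  proof (cases "j \<le> n div 2")
    case True
    thus ?thesis using j0 y' xj by (intro exI[of _ j]) (auto simp: power_inverse)
  next
    case False
    define i where "i = n + 1 - j"
    have i1: "1 \<le> i" "i \<le> n div 2" using False j ev by (auto simp: i_def elim!: evenE)
    have "\<theta> ^ i * \<theta> ^ j = \<theta> ^ (n+1)" using j by (simp add: i_def power_add[symmetric])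
    hence "\<theta> ^ i * x = 1" using prim xj by (simp add: primitive_root_of_unity_def)
    hence ti: "\<theta> ^ i = inverse x" using x0 by (simp add: field_simps)
    have "y = \<theta>^i + inverse \<theta> ^ i" using ti y' x0 by (simp add: power_inverse)
    thus ?thesis using i1 by blast
  qed
qed


theorem theorem2p6:
  fixes a b :: "'a::{finite,field}" and n :: nat
  assumes "\<exists>m. card (UNIV :: 'a set) = 2 ^ m"
    and "b \<noteq> 0"
    and "n \<ge> 2"
    and "gcd (n + 1) (card (UNIV :: 'a set)) = 1"
  shows "even n \<and>
    (\<forall>\<theta> :: 'a alg_closure. primitive_root_of_unity (n + 1) \<theta> \<longrightarrow>
      (is_LCD (2 * n) (toeplitz_code n a b) \<longleftrightarrow>
        to_ac (a / b) \<notin> {to_ac (- 1 / b) + \<theta> ^ i + inverse \<theta> ^ i | i. 1 \<le> i \<and> i \<le> n div 2}))"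
proof -
  have two: "(2::'a) = 0" using char2 assms(1) by blast
  have ev: "even n" by (rule even_n[where 'a='a, OF assms(1) assms(4)])
  have twoK: "(2::'a alg_closure) = 0" by (metis to_ac_numeral two to_ac_0)
  have neg: "-z = z" for z :: 'a
  proof -
    have "z + z = 0" using two by (metis mult_2 mult_zero_left)
    thus ?thesis by (rule minus_unique)
  qed
  show ?thesis
  proof (intro conjI allI impI)
    show "even n" by (rule ev)
    fix \<theta> :: "'a alg_closure" assume prim: "primitive_root_of_unity (n + 1) \<theta>"
    define t where "t = -(a+1)/b"
    have ta: "t = a/b - (-1/b)"
    proof -
      have "t = -((a+1)/b)" unfolding t_def by (rule minus_divide_left[symmetric])
      also have "\<dots> = (a+1)/b" by (rule neg)
      also have "\<dots> = a/b - (-1/b)" using assms(2) by (simp add: field_simps)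
      finally show ?thesis .
    qed
    have tt: "to_ac t = to_ac (a/b) - to_ac (-1/b)" unfolding ta by simp
    have key: "to_ac (a/b) = to_ac (-1/b) + \<theta> ^ i + inverse \<theta> ^ i \<longleftrightarrow> to_ac t = \<theta> ^ i + inverse \<theta> ^ i" for i
      unfolding tt by (auto simp: algebra_simps)
    have "is_LCD (2 * n) (toeplitz_code n a b) \<longleftrightarrow>
      (\<forall>w\<in>fvecs n. (\<forall>i<n. mv n (tridiag_toeplitz n (a+1) b) w i = 0) \<longrightarrow> (\<forall>i<n. w i = 0))"
      by (rule LCD_ker[OF two])
    also have "\<dots> \<longleftrightarrow> sq t (n+1) \<noteq> 0" unfolding t_def
      by (rule ker_iff) (use assms(2,3) in auto)
    also have "\<dots> \<longleftrightarrow> sq (to_ac t) (n+1) \<noteq> 0"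
      by (metis to_ac_sq to_ac_eq_0_iff)
    also have "\<dots> \<longleftrightarrow> \<not> (\<exists>i. to_ac t = \<theta>^i + inverse \<theta> ^ i \<and> 1 \<le> i \<and> i \<le> n div 2)"
      using main_roots[OF twoK prim ev] by simp
    also have "\<dots> \<longleftrightarrow> to_ac (a / b) \<notin> {to_ac (- 1 / b) + \<theta> ^ i + inverse \<theta> ^ i | i. 1 \<le> i \<and> i \<le> n div 2}"
      using key by auto
    finally show "is_LCD (2 * n) (toeplitz_code n a b) \<longleftrightarrow>
        to_ac (a / b) \<notin> {to_ac (- 1 / b) + \<theta> ^ i + inverse \<theta> ^ i | i. 1 \<le> i \<and> i \<le> n div 2}" .
  qed
qed

end
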